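(* For every integer $n\ge 2$, $d_{n+1}+1 < (d_n+1)^2$.
   Context: A delta-matroid $(E,\mathcal F)$ consists of a finite ground set $E$ and a non-empty collection $\mathcal F$ of subsets of $E$ (the feasible sets) satisfying the symmetric exchange axiom: for all $X,Y\in\mathcal F$ and every $e\in X\triangle Y$ there exists $f\in X\triangle Y$ (possibly $f=e$) with $X\triangle\{e,f\}\in\mathcal F$. Let $d_n$ denote the number of labelled delta-matroids with ground set $[n]=\{1,\dots,n\}$, i.e. the number of collections $\mathcal F$ of subsets of $[n]$ such that $([n],\mathcal F)$ is a delta-matroid. *)

theory Defs
  imports Main
begin

definition symdiff :: "'a set \<Rightarrow> 'a set \<Rightarrow> 'a set" where
  "symdiff X Y = (X - Y) \<union> (Y - X)"

definition delta_matroid :: "'a set \<Rightarrow> 'a set set \<Rightarrow> bool" where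
  "delta_matroid E F \<longleftrightarrow> finite E \<and> F \<noteq> {} \<and> (\<forall>X\<in>F. X \<subseteq> E) \<and>
     (\<forall>X\<in>F. \<forall>Y\<in>F. \<forall>e\<in>symdiff X Y. \<exists>f\<in>symdiff X Y. symdiff X {e, f} \<in> F)"

definition num_delta_matroids :: "nat \<Rightarrow> nat" where
  "num_delta_matroids n = card {F. F \<subseteq> Pow {1..n} \<and> delta_matroid {1..n} F}"

end

theory Submission
  imports Defs
begin

definition DM :: "nat \<Rightarrow> nat set set set" where
  "DM n = {F. F \<subseteq> Pow {1..n} \<and> delta_matroid {1..n} F}"

definition phi :: "nat \<Rightarrow> nat set set \<Rightarrow> nat set set \<times> nat set set" where
  "phi n F = ({X\<in>F. Suc n \<notin> X}, (\<lambda>X. X - {Suc n}) ` {X\<in>F. Suc n \<in> X})"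

lemma finite_DM: "finite (DM n)"
  unfolding DM_def by (rule finite_subset[of _ "Pow (Pow {1..n})"]) auto

lemma empty_notin_DM: "{} \<notin> DM n"
  unfolding DM_def delta_matroid_def by auto

lemma phi_inj: "inj_on (phi n) (DM (Suc n))"
proof (rule inj_onI)
  fix F G assume F: "F \<in> DM (Suc n)" and G: "G \<in> DM (Suc n)" and eq: "phi n F = phi n G"
  have rec: "H = fst (phi n H) \<union> insert (Suc n) ` snd (phi n H)" if "H \<subseteq> Pow {1..Suc n}" for H
  proof -
    have "insert (Suc n) ` ((\<lambda>X. X - {Suc n}) ` {X\<in>H. Suc n \<in> X}) = {X\<in>H. Suc n \<in> X}"
      by (auto simp: image_iff insert_absorb)
    thus ?thesis unfolding phi_def by auto
  qed
  have "F \<subseteq> Pow {1..Suc n}" "G \<subseteq> Pow {1..Suc n}" using F G unfolding DM_def by auto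
  thus "F = G" using rec eq by metis
qed

lemma symdiff_mem: "x \<in> symdiff A B \<longleftrightarrow> (x \<in> A) \<noteq> (x \<in> B)"
  unfolding symdiff_def by auto

lemma sub_aux: "X \<subseteq> {1..Suc n} \<Longrightarrow> X - {Suc n} \<subseteq> {1..n}"
  by (auto simp: subset_iff le_Suc_eq)

lemma sub_aux2: "X \<subseteq> {1..Suc n} \<Longrightarrow> Suc n \<notin> X \<Longrightarrow> X \<subseteq> {1..n}"
  using sub_aux[of X n] by auto

lemma phi_fst: assumes "F \<in> DM (Suc n)" shows "fst (phi n F) \<in> DM n \<union> {{}}"
proof -
  let ?F0 = "{X\<in>F. Suc n \<notin> X}"
  have sub: "?F0 \<subseteq> Pow {1..n}" using assms sub_aux2 unfolding DM_def by blast
  have ex: "\<forall>X\<in>?F0. \<forall>Y\<in>?F0. \<forall>e\<in>symdiff X Y. \<exists>f\<in>symdiff X Y. symdiff X {e, f} \<in> ?F0"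
  proof (intro ballI)
    fix X Y e assume X: "X \<in> ?F0" and Y: "Y \<in> ?F0" and e: "e \<in> symdiff X Y"
    from assms X Y e obtain f where f: "f \<in> symdiff X Y" "symdiff X {e, f} \<in> F"
      unfolding DM_def delta_matroid_def by blast
    have "Suc n \<notin> symdiff X {e,f}" using X Y e f(1) by (auto simp: symdiff_mem)
    thus "\<exists>f\<in>symdiff X Y. symdiff X {e, f} \<in> ?F0" using f by blast
  qed
  show ?thesis
  proof (cases "?F0 = {}")
    case False
    hence "?F0 \<in> DM n" using sub ex unfolding DM_def delta_matroid_def by auto
    thus ?thesis unfolding phi_def by simp
  qed (simp add: phi_def)
qed

lemma DM_exch: assumes "F \<in> DM m" "X \<in> F" "Y \<in> F" "e \<in> symdiff X Y"
  obtains f where "f \<in> symdiff X Y" "symdiff X {e, f} \<in> F"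
  using assms unfolding DM_def delta_matroid_def by blast

lemma phi_snd: assumes "F \<in> DM (Suc n)" shows "snd (phi n F) \<in> DM n \<union> {{}}"
proof -
  let ?F1 = "(\<lambda>X. X - {Suc n}) ` {X\<in>F. Suc n \<in> X}"
  have sub: "?F1 \<subseteq> Pow {1..n}" using assms sub_aux unfolding DM_def by blast
  have ex: "\<forall>X\<in>?F1. \<forall>Y\<in>?F1. \<forall>e\<in>symdiff X Y. \<exists>f\<in>symdiff X Y. symdiff X {e, f} \<in> ?F1"
  proof (intro ballI)
    fix X' Y' e assume X': "X' \<in> ?F1" and Y': "Y' \<in> ?F1" and e: "e \<in> symdiff X' Y'"
    from X' obtain X where X: "X \<in> F" "Suc n \<in> X" "X' = X - {Suc n}" by blast
    from Y' obtain Y where Y: "Y \<in> F" "Suc n \<in> Y" "Y' = Y - {Suc n}" by blast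
    have sd: "symdiff X' Y' = symdiff X Y" using X(2,3) Y(2,3) by (auto simp: symdiff_def)
    have e2: "e \<in> symdiff X Y" using e sd by simp
    obtain f where f: "f \<in> symdiff X Y" "symdiff X {e, f} \<in> F"
      using DM_exch[OF assms X(1) Y(1) e2] by blast
    have ne: "e \<noteq> Suc n" "f \<noteq> Suc n" using e2 f(1) X(2) Y(2) by (auto simp: symdiff_mem)
    have "Suc n \<in> symdiff X {e,f}" using ne X(2) by (simp add: symdiff_mem)
    moreover have "symdiff X {e,f} - {Suc n} = symdiff X' {e,f}" using ne X(3)
      by (auto simp: symdiff_def)
    ultimately have "symdiff X' {e,f} \<in> ?F1" using f(2) by blast
    thus "\<exists>f\<in>symdiff X' Y'. symdiff X' {e, f} \<in> ?F1" using f(1) sd by auto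
  qed
  show ?thesis
  proof (cases "?F1 = {}")
    case False
    hence "?F1 \<in> DM n" using sub ex unfolding DM_def delta_matroid_def by auto
    thus ?thesis unfolding phi_def by simp
  qed (simp add: phi_def)
qed

lemma phi_not_empty: assumes "F \<in> DM (Suc n)" shows "phi n F \<noteq> ({}, {})"
proof -
  have "F \<noteq> {}" using assms unfolding DM_def delta_matroid_def by blast
  then obtain X where "X \<in> F" by blast
  thus ?thesis unfolding phi_def by (cases "Suc n \<in> X") blast+
qed

lemma phi_not_bad: assumes "F \<in> DM (Suc n)" "n \<ge> 2" shows "phi n F \<noteq> ({{}}, {{1,2}})"
proof
  assume eq: "phi n F = ({{}}, {{1,2}})"
  have F0: "{X\<in>F. Suc n \<notin> X} = {{}}" using eq unfolding phi_def by simp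
  have F1: "(\<lambda>X. X - {Suc n}) ` {X\<in>F. Suc n \<in> X} = {{1,2}}" using eq unfolding phi_def by simp
  have e: "{} \<in> F" using F0 by blast
  have "{1,2} \<in> (\<lambda>X. X - {Suc n}) ` {X\<in>F. Suc n \<in> X}" using F1 by simp
  then obtain Y where Y: "Y \<in> F" "Suc n \<in> Y" "Y - {Suc n} = {1,2}" by blast
  have Yeq: "Y = insert (Suc n) {1,2}" using insert_Diff[OF Y(2)] Y(3) by simp
  have n1: "(1::nat) \<noteq> Suc n" using assms(2) by simp
  have "1 \<in> symdiff {} Y" using Yeq by (simp add: symdiff_mem)
  then obtain f where f: "f \<in> symdiff {} Y" "symdiff {} {1, f} \<in> F"
    using DM_exch[OF assms(1) e Y(1)] by blast
  have s: "symdiff {} {1,f} = {1,f}" by (auto simp: symdiff_def)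
  show False
  proof (cases "f = Suc n")
    case True
    hence "{1, Suc n} \<in> {X\<in>F. Suc n \<in> X}" using f(2) s by simp
    hence "{1, Suc n} - {Suc n} \<in> (\<lambda>X. X - {Suc n}) ` {X\<in>F. Suc n \<in> X}" by (rule imageI)
    hence "{1, Suc n} - {Suc n} = {1,2}" using F1 by simp
    moreover have "{1, Suc n} - {Suc n} = {1::nat}" using n1 by auto
    ultimately have "{1::nat} = {1,2}" by simp
    hence "(2::nat) \<in> {1}" by blast
    thus False by simp
  next
    case False
    hence "{1,f} \<in> {X\<in>F. Suc n \<notin> X}" using f(2) s n1 by simp
    thus False using F0 by simp
  qed
qed

theorem mainTheorem8:
  fixes n :: nat
  assumes "n \<ge> 2"
  shows "num_delta_matroids (n + 1) + 1 < (num_delta_matroids n + 1) ^ 2"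
proof -
  let ?A = "DM n \<union> {{}}"
  let ?T = "?A \<times> ?A - {({}, {}), ({{}}, {{1,2}})}"
  have finA: "finite ?A" using finite_DM by simp
  have cardA: "card ?A = card (DM n) + 1" using finite_DM empty_notin_DM by simp
  have "{{}} \<in> DM n" unfolding DM_def delta_matroid_def symdiff_def by auto
  moreover have "{{1,2}} \<in> DM n" using assms unfolding DM_def delta_matroid_def symdiff_def by auto
  ultimately have inT: "({}, {}) \<in> ?A \<times> ?A" "({{}}, {{1::nat,2}}) \<in> ?A \<times> ?A" by auto
  have P2: "card {({}, {}), ({{}}, {{1::nat,2}})} = (2::nat)" by simp
  have Psub: "{({}, {}), ({{}}, {{1::nat,2}})} \<subseteq> ?A \<times> ?A" using inT by blast
  have "card ?T = card (?A \<times> ?A) - card {({}, {}), ({{}}, {{1::nat,2}})}"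
    using card_Diff_subset[OF _ Psub] by simp
  hence cardT: "card ?T = card ?A * card ?A - 2"
    using P2 card_cartesian_product by metis
  have "card (DM (Suc n)) \<le> card ?T"
  proof (rule card_inj_on_le[OF phi_inj])
    show "phi n ` DM (Suc n) \<subseteq> ?T"
    proof
      fix p assume "p \<in> phi n ` DM (Suc n)"
      then obtain F where F: "F \<in> DM (Suc n)" "p = phi n F" by blast
      have "p \<in> ?A \<times> ?A" unfolding mem_Times_iff F(2) using phi_fst[OF F(1)] phi_snd[OF F(1)] by blast
      moreover have "p \<noteq> ({}, {})" using phi_not_empty[OF F(1)] F(2) by simp
      moreover have "p \<noteq> ({{}}, {{1,2}})" using phi_not_bad[OF F(1) assms] F(2) by simp
      ultimately show "p \<in> ?T" by blast
    qed
    show "finite ?T" using finA by simp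
  qed
  moreover have "card (DM n) \<ge> 1" using \<open>{{}} \<in> DM n\<close> finite_DM
    by (metis One_nat_def Suc_leI card_gt_0_iff empty_iff)
  hence "card ?A * card ?A \<ge> 4" using cardA
    by (metis add_le_mono le_add2 mult_le_mono one_add_one numeral_Bit0 mult_2 le_trans order_refl)
  ultimately show ?thesis
    unfolding num_delta_matroids_def DM_def[symmetric] using cardT cardA
    by (simp add: power2_eq_square)
qed

end
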